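(* Every totally cyclic directed graph $\vec G$ (without loops and without parallel or antiparallel edges) whose underlying simple graph is three-edge-connected can be twisted, i.e. there exist a partial order $\prec$ on its edge set and a set $A$ such that $(\vec G,G,\prec,A)$ is a twisted graph.
   Context: Signed sets on a finite set $E$: pairs $X=(X^+,X^-)$ of disjoint subsets, $X(e)=+1,-1,0$ according as $e\in X^+$, $e\in X^-$, or neither; support $\underline X=X^+\cup X^-$; $-X=(X^-,X^+)$. Signed sets $X,Y$ are conformal if there is no $e$ with $X(e)=-Y(e)\neq0$; the composition is $(X\circ Y)(e)=X(e)$ if $X(e)\ne0$ and $Y(e)$ otherwise. For a total order $<$ on $E$, $\mathcal C(<)=\{(\{e_1,e_3\},\{e_2\}),(\{e_2\},\{e_1,e_3\}):e_1<e_2<e_3\}$, the signed circuits of the rank 2 oriented matroid $\mathcal M(<)$; its vectors are compositions of families of pairwise conformal members of $\mathcal C(<)$. For a partial order $\prec$ on $E$, $\mathcal C(\prec)$ is the intersection of $\mathcal C(<)$ over all total orders $<$ extending $\prec$. Let $\vec G=(V,\vec E)$ be a directed graph (no loops, no parallel or antiparallel edges) with underlying simple graph $G=(V,E)$, edges of $G$ and $\vec G$ identified. The circuits of the dual graphic oriented matroid $\mathcal M^*(\vec G)$ are the signed minimal cuts $\big(\{(u,w):u\in S,w\notin S\},\{(u,w):w\in S,u\notin S\}\big)$, $S\subset V$ with $S$ and $V\setminus S$ inducing connected subgraphs; a strong map $\mathcal M^*(\vec G)\to\mathcal M(<)$ means every such signed cut is a vector of $\mathcal M(<)$. For $v\in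 V$ let $C^*_v=(\{(u,v)\in\vec E\},\{(v,u)\in\vec E\})$. A twisted graph $T=(\vec G,G,\prec,A)$ consists of such $\vec G$, a partial order $\prec$ on $E$ and a set $A$ with: (1) $G$ is three-edge-connected; (2) $A\subset\mathcal C(\prec)$; (3) for every total order $<$ extending $\prec$ there is a strong map $\mathcal M^*(\vec G)\to\mathcal M(<)$; (4) $A$ can be partitioned as $\{A_v:v\in V\}$ such that for each $v$ the members of $A_v$ are pairwise conformal and their composition is $C^*_v$. A directed graph is totally cyclic if every edge lies in a directed cycle. *)

theory Defs
  imports Main
begin

type_synonym 'e sset = "'e set \<times> 'e set"

definition pos :: "'e sset \<Rightarrow> 'e set" where "pos X = fst X"
definition neg :: "'e sset \<Rightarrow> 'e set" where "neg X = snd X"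

definition signed_set_on :: "'e set \<Rightarrow> 'e sset \<Rightarrow> bool" where
  "signed_set_on E X \<longleftrightarrow> pos X \<subseteq> E \<and> neg X \<subseteq> E \<and> pos X \<inter> neg X = {}"

definition opp :: "'e sset \<Rightarrow> 'e sset" where "opp X = (neg X, pos X)"

definition conformal :: "'e sset \<Rightarrow> 'e sset \<Rightarrow> bool" where
  "conformal X Y \<longleftrightarrow> pos X \<inter> neg Y = {} \<and> neg X \<inter> pos Y = {}"

definition pairwise_conformal :: "'e sset set \<Rightarrow> bool" where
  "pairwise_conformal F \<longleftrightarrow> (\<forall>X\<in>F. \<forall>Y\<in>F. conformal X Y)"

text \<open>Composition of a family of pairwise conformal signed sets (order-independent;
  for conformal sets, iterated composition is the union of positive and negative parts).\<close>
definition compose_family :: "'e sset set \<Rightarrow> 'e sset" where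
  "compose_family F = (\<Union>X\<in>F. pos X, \<Union>X\<in>F. neg X)"

text \<open>Strict total orders on E (given as a relation L, e < f iff (e,f) \<in> L).\<close>
definition strict_total_order_on :: "'e set \<Rightarrow> 'e rel \<Rightarrow> bool" where
  "strict_total_order_on E L \<longleftrightarrow> L \<subseteq> E \<times> E \<and> trans L \<and> irrefl L \<and> total_on E L"

definition strict_partial_order_on :: "'e set \<Rightarrow> 'e rel \<Rightarrow> bool" where
  "strict_partial_order_on E P \<longleftrightarrow> P \<subseteq> E \<times> E \<and> trans P \<and> irrefl P"

text \<open>Signed circuits C(<) of the rank 2 oriented matroid M(<).\<close>
definition circuits_tot :: "'e rel \<Rightarrow> 'e sset set" where
  "circuits_tot L = {({e1, e3}, {e2}) | e1 e2 e3. (e1, e2) \<in> L \<and> (e2, e3) \<in> L}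
                  \<union> {({e2}, {e1, e3}) | e1 e2 e3. (e1, e2) \<in> L \<and> (e2, e3) \<in> L}"

definition vector_tot :: "'e rel \<Rightarrow> 'e sset \<Rightarrow> bool" where
  "vector_tot L X \<longleftrightarrow> (\<exists>F. F \<subseteq> circuits_tot L \<and> pairwise_conformal F \<and> X = compose_family F)"

definition linear_extensions :: "'e set \<Rightarrow> 'e rel \<Rightarrow> 'e rel set" where
  "linear_extensions E P = {L. strict_total_order_on E L \<and> P \<subseteq> L}"

definition circuits_po :: "'e set \<Rightarrow> 'e rel \<Rightarrow> 'e sset set" where
  "circuits_po E P = (\<Inter>L\<in>linear_extensions E P. circuits_tot L)"

text \<open>Directed graphs: finite vertex set V, edge set D \<subseteq> V \<times> V, no loops,
  no antiparallel edges (parallel edges are excluded by using a set).\<close>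
definition digraph :: "'v set \<Rightarrow> ('v \<times> 'v) set \<Rightarrow> bool" where
  "digraph V D \<longleftrightarrow> finite V \<and> D \<subseteq> V \<times> V \<and> (\<forall>u. (u, u) \<notin> D)
      \<and> (\<forall>u w. (u, w) \<in> D \<longrightarrow> (w, u) \<notin> D)"

definition connected_in :: "'v set \<Rightarrow> ('v \<times> 'v) set \<Rightarrow> bool" where
  "connected_in W F \<longleftrightarrow> W \<noteq> {} \<and>
     (\<forall>x\<in>W. \<forall>y\<in>W. (x, y) \<in> ({(a, b). (a, b) \<in> F \<or> (b, a) \<in> F} \<inter> W \<times> W)\<^sup>*)"

definition three_edge_connected :: "'v set \<Rightarrow> ('v \<times> 'v) set \<Rightarrow> bool" where
  "three_edge_connected V D \<longleftrightarrow> (\<forall>X. X \<subseteq> D \<and> card X < 3 \<longrightarrow> connected_in V (D - X))"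

definition directed_cycle :: "('v \<times> 'v) set \<Rightarrow> 'v list \<Rightarrow> bool" where
  "directed_cycle D vs \<longleftrightarrow> length vs \<ge> 2 \<and> distinct vs \<and>
     (\<forall>i < length vs. (vs ! i, vs ! ((i + 1) mod length vs)) \<in> D)"

definition cycle_edges :: "'v list \<Rightarrow> ('v \<times> 'v) set" where
  "cycle_edges vs = {(vs ! i, vs ! ((i + 1) mod length vs)) | i. i < length vs}"

definition totally_cyclic :: "('v \<times> 'v) set \<Rightarrow> bool" where
  "totally_cyclic D \<longleftrightarrow> (\<forall>e\<in>D. \<exists>vs. directed_cycle D vs \<and> e \<in> cycle_edges vs)"

definition signed_cut :: "'v set \<Rightarrow> ('v \<times> 'v) set \<Rightarrow> 'v set \<Rightarrow> ('v \<times> 'v) sset" where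
  "signed_cut V D S = ({(u, w) \<in> D. u \<in> S \<and> w \<notin> S}, {(u, w) \<in> D. w \<in> S \<and> u \<notin> S})"

text \<open>Circuits of the dual graphic oriented matroid M*(G): signed minimal cuts.\<close>
definition cocircuits :: "'v set \<Rightarrow> ('v \<times> 'v) set \<Rightarrow> ('v \<times> 'v) sset set" where
  "cocircuits V D = {signed_cut V D S | S. S \<subseteq> V \<and> connected_in S D \<and> connected_in (V - S) D}"

definition strong_map :: "'v set \<Rightarrow> ('v \<times> 'v) set \<Rightarrow> ('v \<times> 'v) rel \<Rightarrow> bool" where
  "strong_map V D L \<longleftrightarrow> (\<forall>X\<in>cocircuits V D. vector_tot L X)"

definition star_cocircuit :: "('v \<times> 'v) set \<Rightarrow> 'v \<Rightarrow> ('v \<times> 'v) sset" where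
  "star_cocircuit D v = ({(u, w) \<in> D. w = v}, {(u, w) \<in> D. u = v})"

definition twisted_graph ::
  "'v set \<Rightarrow> ('v \<times> 'v) set \<Rightarrow> ('v \<times> 'v) rel \<Rightarrow> ('v \<times> 'v) sset set \<Rightarrow> bool" where
  "twisted_graph V D P A \<longleftrightarrow>
     digraph V D \<and> strict_partial_order_on D P \<and>
     three_edge_connected V D \<and>
     A \<subseteq> circuits_po D P \<and>
     (\<forall>L\<in>linear_extensions D P. strong_map V D L) \<and>
     (\<exists>Av :: 'v \<Rightarrow> ('v \<times> 'v) sset set.
        A = (\<Union>v\<in>V. Av v) \<and>
        (\<forall>v\<in>V. \<forall>w\<in>V. v \<noteq> w \<longrightarrow> Av v \<inter> Av w = {}) \<and>
        (\<forall>v\<in>V. pairwise_conformal (Av v) \<and> compose_family (Av v) = star_cocircuit D v))"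

end

theory Submission
  imports Defs "HOL-Computational_Algebra.Polynomial"
begin


definition circ :: "('v \<times> 'v) set \<Rightarrow> (('v \<times> 'v) \<Rightarrow> real) \<Rightarrow> bool" where
  "circ D h \<longleftrightarrow> (\<forall>v. (\<Sum>x\<in>{(u, w) \<in> D. w = v}. h x) = (\<Sum>x\<in>{(u, w) \<in> D. u = v}. h x))"

lemma fin_sub[intro]: "finite D \<Longrightarrow> finite {(u, w) \<in> D. P u w}"
  by (rule rev_finite_subset) auto

lemma sum_in_group:
  fixes h :: "('v \<times> 'v) \<Rightarrow> real"
  assumes "finite D" "finite S"
  shows "(\<Sum>v\<in>S. \<Sum>x\<in>{(u, w) \<in> D. w = v}. h x) = (\<Sum>x\<in>{(u, w) \<in> D. w \<in> S}. h x)"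
proof -
  have "(\<Sum>x\<in>{(u, w) \<in> D. w \<in> S}. h x) = (\<Sum>y\<in>S. sum h {x \<in> {(u, w) \<in> D. w \<in> S}. snd x = y})"
    by (rule sum.group[symmetric]) (use assms in auto)
  also have "\<dots> = (\<Sum>v\<in>S. \<Sum>x\<in>{(u, w) \<in> D. w = v}. h x)"
    by (rule sum.cong) (auto intro!: sum.cong)
  finally show ?thesis by simp
qed

lemma sum_out_group:
  fixes h :: "('v \<times> 'v) \<Rightarrow> real"
  assumes "finite D" "finite S"
  shows "(\<Sum>v\<in>S. \<Sum>x\<in>{(u, w) \<in> D. u = v}. h x) = (\<Sum>x\<in>{(u, w) \<in> D. u \<in> S}. h x)"
proof -
  have "(\<Sum>x\<in>{(u, w) \<in> D. u \<in> S}. h x) = (\<Sum>y\<in>S. sum h {x \<in> {(u, w) \<in> D. u \<in> S}. fst x = y})"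
    by (rule sum.group[symmetric]) (use assms in auto)
  also have "\<dots> = (\<Sum>v\<in>S. \<Sum>x\<in>{(u, w) \<in> D. u = v}. h x)"
    by (rule sum.cong) (auto intro!: sum.cong)
  finally show ?thesis by simp
qed

lemma cut_eq:
  assumes "circ D h" "finite D" "finite S"
  shows "(\<Sum>x\<in>{(u, w) \<in> D. u \<in> S \<and> w \<notin> S}. h x) = (\<Sum>x\<in>{(u, w) \<in> D. w \<in> S \<and> u \<notin> S}. h x)"
proof -
  have e: "(\<Sum>x\<in>{(u, w) \<in> D. w \<in> S}. h x) = (\<Sum>x\<in>{(u, w) \<in> D. u \<in> S}. h x)"
    using assms sum_in_group[of D S h] sum_out_group[of D S h] unfolding circ_def by simp
  have s1: "{(u, w) \<in> D. w \<in> S} = {(u, w) \<in> D. u \<in> S \<and> w \<in> S} \<union> {(u, w) \<in> D. w \<in> S \<and> u \<notin> S}" by auto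
  have s2: "{(u, w) \<in> D. u \<in> S} = {(u, w) \<in> D. u \<in> S \<and> w \<in> S} \<union> {(u, w) \<in> D. u \<in> S \<and> w \<notin> S}" by auto
  have f: "finite {(u, w) \<in> D. P u w}" for P using assms(2) by (rule rev_finite_subset) auto
  have "(\<Sum>x\<in>{(u, w) \<in> D. w \<in> S}. h x) = (\<Sum>x\<in>{(u, w) \<in> D. u \<in> S \<and> w \<in> S}. h x) + (\<Sum>x\<in>{(u, w) \<in> D. w \<in> S \<and> u \<notin> S}. h x)"
    unfolding s1 by (rule sum.union_disjoint) (auto intro: f)
  moreover have "(\<Sum>x\<in>{(u, w) \<in> D. u \<in> S}. h x) = (\<Sum>x\<in>{(u, w) \<in> D. u \<in> S \<and> w \<in> S}. h x) + (\<Sum>x\<in>{(u, w) \<in> D. u \<in> S \<and> w \<notin> S}. h x)"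
    unfolding s2 by (rule sum.union_disjoint) (auto intro: f)
  ultimately show ?thesis using e by simp
qed

lemma circ_lin2:
  assumes "circ D F" "circ D G"
  shows "circ D (\<lambda>x. F x - s * G x)"
  using assms unfolding circ_def by (simp add: sum_subtractf sum_distrib_left[symmetric])

lemma circ_sum:
  assumes "\<And>i. i < K \<Longrightarrow> circ D (h i)"
  shows "circ D (\<lambda>x. \<Sum>i<K. c i * h i x)"
  unfolding circ_def
proof
  fix v
  have "(\<Sum>x\<in>{(u, w) \<in> D. w = v}. \<Sum>i<K. c i * h i x) = (\<Sum>i<K. c i * (\<Sum>x\<in>{(u, w) \<in> D. w = v}. h i x))"
    by (subst sum.swap) (simp add: sum_distrib_left)
  also have "\<dots> = (\<Sum>i<K. c i * (\<Sum>x\<in>{(u, w) \<in> D. u = v}. h i x))"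
    using assms unfolding circ_def by (auto intro!: sum.cong)
  also have "\<dots> = (\<Sum>x\<in>{(u, w) \<in> D. u = v}. \<Sum>i<K. c i * h i x)"
    by (subst sum.swap) (simp add: sum_distrib_left)
  finally show "(\<Sum>x\<in>{(u, w) \<in> D. w = v}. \<Sum>i<K. c i * h i x) = (\<Sum>x\<in>{(u, w) \<in> D. u = v}. \<Sum>i<K. c i * h i x)" .
qed

lemma sum_shift_mod:
  fixes f :: "nat \<Rightarrow> real"
  assumes "n > 0"
  shows "(\<Sum>i<n. f (Suc i mod n)) = (\<Sum>i<n. f i)"
proof -
  obtain m where n: "n = Suc m" using assms by (cases n) auto
  have "(\<Sum>i<Suc m. f (Suc i mod Suc m)) = (\<Sum>i<m. f (Suc i mod Suc m)) + f 0"
    by (simp add: sum.lessThan_Suc)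
  also have "(\<Sum>i<m. f (Suc i mod Suc m)) = (\<Sum>i<m. f (Suc i))"
    by (rule sum.cong) auto
  also have "(\<Sum>i<m. f (Suc i)) + f 0 = (\<Sum>i<Suc m. f i)"
    unfolding sum.lessThan_Suc_shift by simp
  finally show ?thesis using n by simp
qed

lemma cycle_circ:
  assumes "directed_cycle D vs" "finite D"
  shows "circ D (\<lambda>x. if x \<in> cycle_edges vs then 1 else 0)"
proof -
  let ?n = "length vs"
  define g where "g i = (vs ! i, vs ! ((i + 1) mod ?n))" for i
  have Z: "cycle_edges vs = g ` {..<?n}" unfolding cycle_edges_def g_def by auto
  have ZD: "cycle_edges vs \<subseteq> D" using assms(1) unfolding Z g_def directed_cycle_def by auto
  have inj: "inj_on g {..<?n}"
    using assms(1) unfolding inj_on_def g_def directed_cycle_def by (auto simp: nth_eq_iff_index_eq)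
  have n0: "?n > 0" using assms(1) unfolding directed_cycle_def by auto
  have key: "(\<Sum>x\<in>{(u, w) \<in> D. P u w}. (if x \<in> cycle_edges vs then 1 else 0)) = (\<Sum>i<?n. if P (fst (g i)) (snd (g i)) then 1 else (0::real))" for P
  proof -
    have "(\<Sum>x\<in>{(u, w) \<in> D. P u w}. (if x \<in> cycle_edges vs then 1 else (0::real)))
        = (\<Sum>x\<in>cycle_edges vs. if P (fst x) (snd x) then 1 else 0)"
    proof -
      have "(\<Sum>x\<in>{(u, w) \<in> D. P u w}. (if x \<in> cycle_edges vs then 1 else (0::real)))
          = real (card ({(u, w) \<in> D. P u w} \<inter> {x. x \<in> cycle_edges vs}))"
        using fin_sub[OF assms(2), of P] by (simp add: sum.If_cases)
      also have "{(u, w) \<in> D. P u w} \<inter> {x. x \<in> cycle_edges vs} = cycle_edges vs \<inter> {x. P (fst x) (snd x)}"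
        using ZD by auto
      also have "real (card \<dots>) = (\<Sum>x\<in>cycle_edges vs. if P (fst x) (snd x) then 1 else 0)"
        using Z by (simp add: sum.If_cases)
      finally show ?thesis .
    qed
    also have "\<dots> = (\<Sum>i<?n. if P (fst (g i)) (snd (g i)) then 1 else 0)"
      unfolding Z by (simp add: sum.reindex[OF inj])
    finally show ?thesis .
  qed
  show ?thesis unfolding circ_def
  proof
    fix v
    have "(\<Sum>i<?n. if snd (g i) = v then 1 else (0::real)) = (\<Sum>i<?n. (\<lambda>j. if vs ! j = v then 1 else 0) (Suc i mod ?n))"
      by (simp add: g_def)
    also have "\<dots> = (\<Sum>i<?n. if vs ! i = v then 1 else 0)" by (rule sum_shift_mod[OF n0])
    finally show "(\<Sum>x\<in>{(u, w) \<in> D. w = v}. (if x \<in> cycle_edges vs then 1 else 0)) = (\<Sum>x\<in>{(u, w) \<in> D. u = v}. (if x \<in> cycle_edges vs then 1 else (0::real)))"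
      using key[of "\<lambda>u w. w = v"] key[of "\<lambda>u w. u = v"] by (simp add: g_def)
  qed
qed



lemma Mlem:
  fixes r G :: "'a \<Rightarrow> real"
  assumes "finite P" "finite N" "\<forall>x\<in>P \<union> N. G x > 0"
    "(\<Sum>x\<in>P. G x * (r x - s)) = (\<Sum>x\<in>N. G x * (r x - s))"
    "\<forall>p\<in>P. s \<le> r p" "\<forall>n\<in>N. r n \<le> s"
  shows "(\<forall>p\<in>P. r p = s) \<and> (\<forall>n\<in>N. r n = s)"
proof -
  have a: "\<forall>x\<in>P. 0 \<le> G x * (r x - s)" using assms(3,5) by (simp add: less_imp_le)
  have b: "\<forall>x\<in>N. 0 \<le> G x * (s - r x)" using assms(3,6) by (simp add: less_imp_le)
  have sP: "(\<Sum>x\<in>P. G x * (r x - s)) \<ge> 0" using a by (simp add: sum_nonneg)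
  have sN: "(\<Sum>x\<in>N. G x * (s - r x)) \<ge> 0" using b by (simp add: sum_nonneg)
  have "(\<Sum>x\<in>N. G x * (s - r x)) = - (\<Sum>x\<in>N. G x * (r x - s))"
    by (simp add: sum_negf[symmetric] algebra_simps)
  hence z1: "(\<Sum>x\<in>P. G x * (r x - s)) = 0" and z2: "(\<Sum>x\<in>N. G x * (s - r x)) = 0"
    using sP sN assms(4) by linarith+
  have "\<forall>x\<in>P. G x * (r x - s) = 0" using sum_nonneg_eq_0_iff[OF assms(1) bspec[OF a]] z1 by simp
  moreover have "\<forall>x\<in>N. G x * (s - r x) = 0" using sum_nonneg_eq_0_iff[OF assms(2) bspec[OF b]] z2 by simp
  ultimately show ?thesis using assms(3) by (metis UnCI less_numeral_extra(3) mult_eq_0_iff right_minus_eq)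
qed

lemma tri:
  fixes r :: "'a \<Rightarrow> real"
  assumes fin: "finite P" "finite N" and sub: "P \<subseteq> D" "N \<subseteq> D" and dis: "P \<inter> N = {}"
    and inj: "inj_on r D"
    and M1: "\<And>s. (\<forall>p\<in>P. s \<le> r p) \<Longrightarrow> (\<forall>n\<in>N. r n \<le> s) \<Longrightarrow> (\<forall>p\<in>P. r p = s)"
    and M2: "\<And>s. (\<forall>n\<in>N. s \<le> r n) \<Longrightarrow> (\<forall>p\<in>P. r p \<le> s) \<Longrightarrow> (\<forall>p\<in>P. r p = s)"
    and e: "e \<in> P"
  shows "\<exists>C\<in>circuits_tot {(x,y). x \<in> D \<and> y \<in> D \<and> r x < r y}. pos C \<subseteq> P \<and> neg C \<subseteq> N \<and> e \<in> pos C"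
proof -
  let ?L = "{(x,y). x \<in> D \<and> y \<in> D \<and> r x < r y}"
  have T1: "?thesis" if "n \<in> N" "p \<in> P" "r e < r n" "r n < r p" for n p
  proof -
    have "({e, p}, {n}) \<in> circuits_tot ?L" unfolding circuits_tot_def using that sub e by blast
    thus ?thesis using that e by (intro bexI[of _ "({e, p}, {n})"]) (auto simp: pos_def neg_def)
  qed
  have T2: "?thesis" if "n \<in> N" "p \<in> P" "r p < r n" "r n < r e" for n p
  proof -
    have "({p, e}, {n}) \<in> circuits_tot ?L" unfolding circuits_tot_def using that sub e by blast
    thus ?thesis using that e by (intro bexI[of _ "({p, e}, {n})"]) (auto simp: pos_def neg_def)
  qed
  have T3: "?thesis" if "n1 \<in> N" "n2 \<in> N" "r n1 < r e" "r e < r n2" for n1 n2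
  proof -
    have "({e}, {n1, n2}) \<in> circuits_tot ?L" unfolding circuits_tot_def using that sub e by blast
    thus ?thesis using that e by (intro bexI[of _ "({e}, {n1, n2})"]) (auto simp: pos_def neg_def)
  qed
  have ne: "r n \<noteq> r e" if "n \<in> N" for n
    using that e dis sub inj unfolding inj_on_def by blast
  show ?thesis
  proof (cases "N = {}")
    case True
    define s where "s = Min (r ` P)"
    have "\<forall>p\<in>P. s \<le> r p" unfolding s_def using fin by auto
    hence "\<forall>p\<in>P. r p = s" using M1 True by blast
    moreover have "\<forall>p\<in>P. s - 1 \<le> r p" using \<open>\<forall>p\<in>P. r p = s\<close> by auto
    hence "\<forall>p\<in>P. r p = s - 1" using M1 True by blast
    ultimately have False using e by fastforce
    thus ?thesis ..
  next
    case False
    show ?thesis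
    proof (cases "\<exists>n\<in>N. r n > r e")
      case True
      then obtain n2 where n2: "n2 \<in> N" "r n2 > r e" by blast
      show ?thesis
      proof (cases "\<exists>n\<in>N. r n < r e")
        case True
        then show ?thesis using T3 n2 by blast
      next
        case False
        hence allN: "\<forall>n\<in>N. r n > r e" using ne by (meson linorder_neqE_linordered_idom)
        define s where "s = Min (r ` N)"
        obtain n0 where n0: "n0 \<in> N" "r n0 = s" unfolding s_def using fin \<open>N \<noteq> {}\<close>
          by (metis (mono_tags, lifting) Min_in finite_imageI image_iff image_is_empty)
        have Ns: "\<forall>n\<in>N. s \<le> r n" unfolding s_def using fin by auto
        show ?thesis
        proof (cases "\<exists>p\<in>P. r p > s")
          case True
          then obtain p where "p \<in> P" "r p > s" by blast
          then show ?thesis using T1[of n0 p] n0 allN by auto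
        next
          case False
          hence "\<forall>p\<in>P. r p \<le> s" by (meson not_le)
          hence "r e = s" using M2 Ns e by blast
          hence False using allN n0 by fastforce
          thus ?thesis ..
        qed
      qed
    next
      case False
      hence allN: "\<forall>n\<in>N. r n < r e" using ne by (meson linorder_neqE_linordered_idom)
      define s where "s = Max (r ` N)"
      obtain n0 where n0: "n0 \<in> N" "r n0 = s" unfolding s_def using fin \<open>N \<noteq> {}\<close>
        by (metis (mono_tags, lifting) Max_in finite_imageI image_iff image_is_empty)
      have Ns: "\<forall>n\<in>N. r n \<le> s" unfolding s_def using fin by auto
      show ?thesis
      proof (cases "\<exists>p\<in>P. r p < s")
        case True
        then obtain p where "p \<in> P" "r p < s" by blast
        then show ?thesis using T2[of n0 p] n0 allN by auto
      next
        case False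
        hence "\<forall>p\<in>P. s \<le> r p" by (meson not_le)
        hence "r e = s" using M1 Ns e by blast
        hence False using allN n0 by fastforce
        thus ?thesis ..
      qed
    qed
  qed
qed

lemma circuits_tot_opp: "C \<in> circuits_tot L \<Longrightarrow> (neg C, pos C) \<in> circuits_tot L"
  unfolding circuits_tot_def pos_def neg_def by auto

lemma cover:
  fixes F G :: "'a \<Rightarrow> real"
  assumes fin: "finite P" "finite N" and sub: "P \<subseteq> D" "N \<subseteq> D" and dis: "P \<inter> N = {}"
    and G: "\<forall>x\<in>D. G x > 0" and inj: "inj_on (\<lambda>x. F x / G x) D"
    and eq: "\<And>s. (\<Sum>x\<in>P. F x - s * G x) = (\<Sum>x\<in>N. F x - s * G x)"
  shows "pairwise_conformal {C \<in> circuits_tot {(x,y). x \<in> D \<and> y \<in> D \<and> F x / G x < F y / G y}. pos C \<subseteq> P \<and> neg C \<subseteq> N}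
     \<and> compose_family {C \<in> circuits_tot {(x,y). x \<in> D \<and> y \<in> D \<and> F x / G x < F y / G y}. pos C \<subseteq> P \<and> neg C \<subseteq> N} = (P, N)"
    (is "?A \<and> ?B")
proof -
  define r where "r x = F x / G x" for x
  have L: "{(x,y). x \<in> D \<and> y \<in> D \<and> F x / G x < F y / G y} = {(x,y). x \<in> D \<and> y \<in> D \<and> r x < r y}"
    unfolding r_def by simp
  have injr: "inj_on r D" using inj unfolding r_def by simp
  have rew: "F x - s * G x = G x * (r x - s)" if "x \<in> D" for x s
    using G that unfolding r_def by (auto simp: field_simps)
  have eq': "(\<Sum>x\<in>P. G x * (r x - s)) = (\<Sum>x\<in>N. G x * (r x - s))" for s
  proof -
    have "(\<Sum>x\<in>P. G x * (r x - s)) = (\<Sum>x\<in>P. F x - s * G x)" using sub rew by (auto intro!: sum.cong)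
    also have "\<dots> = (\<Sum>x\<in>N. F x - s * G x)" by (rule eq)
    also have "\<dots> = (\<Sum>x\<in>N. G x * (r x - s))" using sub rew by (auto intro!: sum.cong)
    finally show ?thesis .
  qed
  have Gpos: "\<forall>x\<in>P \<union> N. G x > 0" using G sub by auto
  have Gpos': "\<forall>x\<in>N \<union> P. G x > 0" using G sub by auto
  have M1: "\<forall>p\<in>P. r p = s" if "\<forall>p\<in>P. s \<le> r p" "\<forall>n\<in>N. r n \<le> s" for s
    using Mlem[OF fin Gpos eq' that] by blast
  have M2: "\<forall>p\<in>P. r p = s" if "\<forall>n\<in>N. s \<le> r n" "\<forall>p\<in>P. r p \<le> s" for s
    using Mlem[of N P G r s, OF fin(2) fin(1) Gpos' eq'[symmetric] that] by blast
  have M1': "\<forall>n\<in>N. r n = s" if "\<forall>n\<in>N. s \<le> r n" "\<forall>p\<in>P. r p \<le> s" for s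
    using Mlem[of N P G r s, OF fin(2) fin(1) Gpos' eq'[symmetric] that] by blast
  have M2': "\<forall>n\<in>N. r n = s" if "\<forall>p\<in>P. s \<le> r p" "\<forall>n\<in>N. r n \<le> s" for s
    using Mlem[OF fin Gpos eq' that] by blast
  let ?F = "{C \<in> circuits_tot {(x,y). x \<in> D \<and> y \<in> D \<and> r x < r y}. pos C \<subseteq> P \<and> neg C \<subseteq> N}"
  have cP: "\<exists>C\<in>?F. e \<in> pos C" if "e \<in> P" for e
    using tri[OF fin sub dis injr M1 M2 that] by blast
  have dis': "N \<inter> P = {}" using dis by blast
  have cN: "\<exists>C\<in>?F. e \<in> neg C" if eN: "e \<in> N" for e
  proof -
    obtain C where C: "C \<in> circuits_tot {(x,y). x \<in> D \<and> y \<in> D \<and> r x < r y}" "pos C \<subseteq> N" "neg C \<subseteq> P" "e \<in> pos C"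
      using tri[OF fin(2) fin(1) sub(2) sub(1) dis' injr M1' M2' eN] by blast
    show ?thesis using circuits_tot_opp[OF C(1)] C(2-4) by (intro bexI[of _ "(neg C, pos C)"]) (auto simp: pos_def neg_def)
  qed
  have "pairwise_conformal ?F" unfolding pairwise_conformal_def conformal_def
  proof (intro ballI conjI)
    fix X Y assume "X \<in> ?F" "Y \<in> ?F"
    hence "pos X \<subseteq> P" "neg X \<subseteq> N" "pos Y \<subseteq> P" "neg Y \<subseteq> N" by auto
    thus "pos X \<inter> neg Y = {}" "neg X \<inter> pos Y = {}" using dis by auto
  qed
  moreover have "(\<Union>X\<in>?F. pos X) = P"
  proof
    show "(\<Union>X\<in>?F. pos X) \<subseteq> P" by auto
    show "P \<subseteq> (\<Union>X\<in>?F. pos X)" using cP by auto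
  qed
  moreover have "(\<Union>X\<in>?F. neg X) = N"
  proof
    show "(\<Union>X\<in>?F. neg X) \<subseteq> N" by auto
    show "N \<subseteq> (\<Union>X\<in>?F. neg X)" using cN by auto
  qed
  ultimately have "pairwise_conformal ?F \<and> compose_family ?F = (P, N)"
    unfolding compose_family_def by simp
  thus ?thesis unfolding L .
qed



lemma path_of_rtrancl:
  assumes "(x, y) \<in> R\<^sup>*"
  shows "\<exists>vs. vs \<noteq> [] \<and> hd vs = x \<and> last vs = y \<and> distinct vs \<and> (\<forall>i. Suc i < length vs \<longrightarrow> (vs ! i, vs ! Suc i) \<in> R)"
  using assms
proof (induction rule: rtrancl_induct)
  case base
  then show ?case by (intro exI[of _ "[x]"]) auto
next
  case (step y z)
  then obtain vs where vs: "vs \<noteq> []" "hd vs = x" "last vs = y" "distinct vs" "\<forall>i. Suc i < length vs \<longrightarrow> (vs ! i, vs ! Suc i) \<in> R"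
    by blast
  show ?case
  proof (cases "z \<in> set vs")
    case True
    then obtain k where k: "k < length vs" "vs ! k = z" by (meson in_set_conv_nth)
    let ?ws = "take (Suc k) vs"
    have "?ws \<noteq> []" using vs(1) by simp
    moreover have "hd ?ws = x" using vs(1,2) by (simp add: hd_take)
    moreover have "last ?ws = z" using k by (simp add: take_Suc_conv_app_nth) 
    moreover have "distinct ?ws" using vs(4) by simp
    moreover have "\<forall>i. Suc i < length ?ws \<longrightarrow> (?ws ! i, ?ws ! Suc i) \<in> R" using vs(5) k by auto
    ultimately show ?thesis by blast
  next
    case False
    let ?ws = "vs @ [z]"
    have "hd ?ws = x" using vs(1,2) by simp
    moreover have "last ?ws = z" by simp
    moreover have "distinct ?ws" using vs(4) False by simp
    moreover have "\<forall>i. Suc i < length ?ws \<longrightarrow> (?ws ! i, ?ws ! Suc i) \<in> R"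
    proof (intro allI impI)
      fix i assume i: "Suc i < length ?ws"
      show "(?ws ! i, ?ws ! Suc i) \<in> R"
      proof (cases "Suc i < length vs")
        case True
        then show ?thesis using vs(5) by (simp add: nth_append)
      next
        case False
        hence "i = length vs - 1" using i by simp
        moreover have "vs ! (length vs - 1) = y" using vs(1,3) by (simp add: last_conv_nth)
        ultimately show ?thesis using step(2) vs(1) False i by (simp add: nth_append)
      qed
    qed
    ultimately show ?thesis by (intro exI[of _ ?ws]) auto
  qed
qed

lemma cross_rtrancl:
  assumes "(x, y) \<in> Q\<^sup>*" "x \<in> S" "y \<notin> S"
  shows "\<exists>u w. (u, w) \<in> Q \<and> u \<in> S \<and> w \<notin> S"
  using assms by (induction rule: rtrancl_induct) auto

lemma reach_in:
  assumes "(b, x) \<in> R\<^sup>*" "R \<subseteq> V \<times> V" "b \<in> V"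
  shows "x \<in> V"
  using assms by (induction rule: rtrancl_induct) auto

lemma sep:
  assumes dg: "digraph V D" and tc: "totally_cyclic D" and tec: "three_edge_connected V D"
    and e: "e \<in> D" and f: "f \<in> D" and ne: "e \<noteq> f"
  shows "\<exists>vs. directed_cycle D vs \<and> (e \<in> cycle_edges vs \<longleftrightarrow> f \<notin> cycle_edges vs)"
proof (rule ccontr)
  assume "\<not> ?thesis"
  hence H: "\<And>vs. directed_cycle D vs \<Longrightarrow> (e \<in> cycle_edges vs \<longleftrightarrow> f \<in> cycle_edges vs)" by blast
  obtain a b where ab: "e = (a, b)" by (cases e)
  have ab2: "a \<noteq> b" "a \<in> V" "b \<in> V" using dg e ab unfolding digraph_def by auto
  have finD: "finite D" using dg unfolding digraph_def by (meson finite_SigmaI rev_finite_subset)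
  have DV: "D \<subseteq> V \<times> V" using dg unfolding digraph_def by auto
  let ?R = "D - {f}"
  define S where "S = {x. (b, x) \<in> ?R\<^sup>*}"
  have bS: "b \<in> S" unfolding S_def by simp
  have SV: "S \<subseteq> V" unfolding S_def using reach_in[of b _ ?R V] DV ab2 by blast
  have finS: "finite S" using SV dg unfolding digraph_def by (meson rev_finite_subset)
  have aS: "a \<notin> S"
  proof
    assume "a \<in> S"
    hence "(b, a) \<in> ?R\<^sup>*" unfolding S_def by simp
    from path_of_rtrancl[OF this] obtain vs where vs: "vs \<noteq> []" "hd vs = b" "last vs = a" "distinct vs"
      "\<forall>i. Suc i < length vs \<longrightarrow> (vs ! i, vs ! Suc i) \<in> ?R"
      by blast
    let ?n = "length vs"
    have len: "?n \<ge> 2"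
    proof (rule ccontr)
      assume "\<not> ?n \<ge> 2"
      moreover have "?n \<noteq> 0" using vs(1) by simp
      ultimately have "?n = 1" by linarith
      hence "hd vs = last vs" using vs(1) by (cases vs) auto
      thus False using vs(2,3) ab2(1) by simp
    qed
    have last: "vs ! (?n - 1) = a" using vs(1,3) by (simp add: last_conv_nth)
    have hd: "vs ! 0 = b" using vs(1,2) by (simp add: hd_conv_nth)
    have edge: "(vs ! i, vs ! ((i + 1) mod ?n)) \<in> ?R \<or> (vs ! i, vs ! ((i + 1) mod ?n)) = e" if "i < ?n" for i
    proof (cases "Suc i < ?n")
      case True
      then show ?thesis using vs(5) by simp
    next
      case False
      hence "i = ?n - 1" using that by simp
      moreover have "Suc i = ?n" using that False by simp
      hence "(i + 1) mod ?n = 0" by simp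
      ultimately show ?thesis using last hd ab by simp
    qed
    have "\<forall>i < ?n. (vs ! i, vs ! ((i + 1) mod ?n)) \<in> D" using edge e by auto
    hence dc: "directed_cycle D vs" unfolding directed_cycle_def
      using len vs(4) by blast
    have "e \<in> cycle_edges vs"
    proof -
      have "?n - 1 + 1 = ?n" using len by simp
      hence "(?n - 1 + 1) mod ?n = 0" by simp
      hence "(vs ! (?n - 1), vs ! ((?n - 1 + 1) mod ?n)) = e" using last hd ab by simp
      moreover have "?n - 1 < ?n" using len by simp
      ultimately show ?thesis unfolding cycle_edges_def by blast
    qed
    moreover have "f \<notin> cycle_edges vs"
    proof
      assume "f \<in> cycle_edges vs"
      then obtain i where "i < ?n" "f = (vs ! i, vs ! ((i + 1) mod ?n))" unfolding cycle_edges_def by blast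
      thus False using edge[of i] ne by auto
    qed
    ultimately show False using H[OF dc] by blast
  qed
  have out: "(u, w) = f" if "(u, w) \<in> D" "u \<in> S" "w \<notin> S" for u w
  proof (rule ccontr)
    assume "(u, w) \<noteq> f"
    hence "(u, w) \<in> ?R" using that by simp
    hence "(b, w) \<in> ?R\<^sup>*" using that(2) unfolding S_def by (simp add: rtrancl_into_rtrancl)
    thus False using that(3) unfolding S_def by simp
  qed
  let ?Q = "{(x, y). (x, y) \<in> D - {e, f} \<or> (y, x) \<in> D - {e, f}} \<inter> V \<times> V"
  have "{e, f} \<subseteq> D \<and> card {e, f} < 3" using e f ne by simp
  hence "connected_in V (D - {e, f})" using tec unfolding three_edge_connected_def by blast
  hence "\<forall>x\<in>V. \<forall>y\<in>V. (x, y) \<in> ?Q\<^sup>*" unfolding connected_in_def by (rule conjunct2)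
  hence "(b, a) \<in> ?Q\<^sup>*" using ab2 by blast
  from cross_rtrancl[OF this bS aS] obtain u w where uw: "(u, w) \<in> ?Q" "u \<in> S" "w \<notin> S" by blast
  have gD: "(w, u) \<in> D" "(w, u) \<noteq> e" "(w, u) \<noteq> f"
    using uw out by auto
  obtain vs where dc: "directed_cycle D vs" and g: "(w, u) \<in> cycle_edges vs"
    using tc gD(1) unfolding totally_cyclic_def by blast
  define \<chi> where "\<chi> x = (if x \<in> cycle_edges vs then 1 else (0::real))" for x
  have ce: "(\<Sum>x\<in>{(u, w) \<in> D. u \<in> S \<and> w \<notin> S}. \<chi> x) = (\<Sum>x\<in>{(u, w) \<in> D. w \<in> S \<and> u \<notin> S}. \<chi> x)"
    unfolding \<chi>_def by (rule cut_eq[OF cycle_circ[OF dc finD] finD finS])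
  have "(\<Sum>x\<in>{(u, w) \<in> D. u \<in> S \<and> w \<notin> S}. \<chi> x) \<le> (\<Sum>x\<in>{f}. \<chi> x)"
    by (rule sum_mono2) (use out in \<open>auto simp: \<chi>_def\<close>)
  moreover have "(\<Sum>x\<in>{e, (w, u)}. \<chi> x) \<le> (\<Sum>x\<in>{(u, w) \<in> D. w \<in> S \<and> u \<notin> S}. \<chi> x)"
    by (rule sum_mono2) (use finD e ab bS aS gD uw in \<open>auto simp: \<chi>_def\<close>)
  moreover have "(\<Sum>x\<in>{e, (w, u)}. \<chi> x) = \<chi> e + 1" using gD g by (simp add: \<chi>_def)
  ultimately have "\<chi> f \<ge> \<chi> e + 1" using ce by simp
  hence "f \<in> cycle_edges vs" "e \<notin> cycle_edges vs" unfolding \<chi>_def by (auto split: if_splits)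
  thus False using H[OF dc] by blast
qed



lemma ext_unique:
  assumes "strict_total_order_on D L" "L' \<in> linear_extensions D L"
  shows "L' = L"
proof
  show "L \<subseteq> L'" using assms(2) unfolding linear_extensions_def by blast
  show "L' \<subseteq> L"
  proof
    fix z assume z: "z \<in> L'"
    obtain x y where xy: "z = (x, y)" by (cases z)
    have L': "L' \<subseteq> D \<times> D" "trans L'" "irrefl L'" "L \<subseteq> L'"
      using assms(2) unfolding linear_extensions_def strict_total_order_on_def by auto
    have "x \<in> D" "y \<in> D" "x \<noteq> y" using z xy L' unfolding irrefl_def by auto
    hence "(x, y) \<in> L \<or> (y, x) \<in> L" using assms(1) unfolding strict_total_order_on_def total_on_def by blast
    moreover have "(y, x) \<notin> L"
    proof
      assume "(y, x) \<in> L"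
      hence "(y, x) \<in> L'" using L' by auto
      hence "(x, x) \<in> L'" using z xy L'(2) unfolding trans_def by blast
      thus False using L'(3) unfolding irrefl_def by blast
    qed
    ultimately show "z \<in> L" using xy by blast
  qed
qed

lemma pos_circ_ne: "C \<in> circuits_tot L \<Longrightarrow> pos C \<noteq> {}"
  unfolding circuits_tot_def pos_def by auto

theorem lemmal:
  fixes V :: "'v set" and D :: "('v \<times> 'v) set"
  assumes "digraph V D"
    and "totally_cyclic D"
    and "three_edge_connected V D"
  shows "\<exists>P A. twisted_graph V D P A"
proof -
  note dg = assms(1) and tc = assms(2) and tec = assms(3)
  have finV: "finite V" and DV: "D \<subseteq> V \<times> V" using dg unfolding digraph_def by auto
  have finD: "finite D" using finV DV by (meson finite_SigmaI rev_finite_subset)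
  define Zs where "Zs = {cycle_edges vs | vs. directed_cycle D vs}"
  have "Zs \<subseteq> Pow D" unfolding Zs_def cycle_edges_def directed_cycle_def by auto
  hence "finite Zs" using finD by (meson finite_Pow_iff rev_finite_subset)
  then obtain zs where zs: "set zs = Zs" using finite_list by blast
  define K where "K = length zs"
  define \<chi> where "\<chi> i x = (if x \<in> zs ! i then 1 else (0::real))" for i x
  have circ\<chi>: "circ D (\<chi> i)" if "i < K" for i
  proof -
    have "zs ! i \<in> Zs" using that zs unfolding K_def by auto
    then obtain vs where "zs ! i = cycle_edges vs" "directed_cycle D vs" unfolding Zs_def by blast
    thus ?thesis using cycle_circ[of D vs] finD unfolding \<chi>_def by simp
  qed
  have inzs: "\<exists>i<K. x \<in> zs ! i" if xD: "x \<in> D" for x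
  proof -
    obtain vs where "directed_cycle D vs" "x \<in> cycle_edges vs" using tc xD unfolding totally_cyclic_def by blast
    hence "cycle_edges vs \<in> set zs" using zs unfolding Zs_def by blast
    then obtain i where "i < K" "zs ! i = cycle_edges vs" unfolding K_def by (metis in_set_conv_nth)
    thus ?thesis using \<open>x \<in> cycle_edges vs\<close> by blast
  qed
  have sepi: "\<exists>i<K. (x \<in> zs ! i \<longleftrightarrow> y \<notin> zs ! i)" if xyD: "x \<in> D" "y \<in> D" "x \<noteq> y" for x y
  proof -
    obtain vs where "directed_cycle D vs" "(x \<in> cycle_edges vs \<longleftrightarrow> y \<notin> cycle_edges vs)"
      using sep[OF dg tc tec xyD] by blast
    moreover hence "cycle_edges vs \<in> set zs" using zs unfolding Zs_def by blast
    ultimately obtain i where "i < K" "zs ! i = cycle_edges vs" unfolding K_def by (metis in_set_conv_nth)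
    thus ?thesis using \<open>(x \<in> cycle_edges vs \<longleftrightarrow> y \<notin> cycle_edges vs)\<close> by metis
  qed
  define g0 where "g0 x = (\<Sum>i<K. 1 * \<chi> i x)" for x
  have \<chi>nn: "\<chi> i x \<ge> 0" for i x unfolding \<chi>_def by simp
  have g0pos: "g0 x \<ge> 1" if xD: "x \<in> D" for x
  proof -
    obtain i where "i < K" "x \<in> zs ! i" using inzs[OF xD] by blast
    hence "\<chi> i x = 1" unfolding \<chi>_def by simp
    moreover have "\<chi> i x \<le> (\<Sum>i<K. \<chi> i x)" using \<open>i < K\<close> \<chi>nn by (intro member_le_sum) auto
    ultimately show ?thesis unfolding g0_def by simp
  qed
  define p where "p x y = (\<Sum>i<K. monom (\<chi> i x * g0 y - \<chi> i y * g0 x) i)" for x y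
  have coeffp: "coeff (p x y) i = \<chi> i x * g0 y - \<chi> i y * g0 x" if "i < K" for x y i
    unfolding p_def using that by (simp add: coeff_sum coeff_monom)
  have pne: "p x y \<noteq> 0" if xyD: "x \<in> D" "y \<in> D" "x \<noteq> y" for x y
  proof -
    obtain i where i: "i < K" "x \<in> zs ! i \<longleftrightarrow> y \<notin> zs ! i" using sepi[OF xyD] by blast
    have "coeff (p x y) i \<noteq> 0"
      using coeffp[OF i(1)] i(2) g0pos[OF xyD(1)] g0pos[OF xyD(2)] unfolding \<chi>_def by auto
    thus ?thesis by auto
  qed
  define R where "R = (\<Union>xy\<in>{xy \<in> D \<times> D. fst xy \<noteq> snd xy}. {t. poly (p (fst xy) (snd xy)) t = 0})"
  have "finite R" unfolding R_def
    using finD pne by (intro finite_UN_I) (auto intro!: poly_roots_finite)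
  moreover have "infinite (range (\<lambda>n::nat. real (Suc n)))"
    by (rule range_inj_infinite) (simp add: inj_on_def)
  ultimately obtain n where "real (Suc n) \<notin> R"
    by (metis (no_types, lifting) finite_subset rangeE subsetI)
  define t where "t = real (Suc n)"
  have tR: "t \<notin> R" and t0: "t > 0" using \<open>real (Suc n) \<notin> R\<close> unfolding t_def by auto
  define f0 where "f0 x = (\<Sum>i<K. t ^ i * \<chi> i x)" for x
  have f0pos: "f0 x > 0" if xD: "x \<in> D" for x
  proof -
    obtain i where "i < K" "x \<in> zs ! i" using inzs[OF xD] by blast
    hence "\<chi> i x = 1" unfolding \<chi>_def by simp
    moreover have "t ^ i * \<chi> i x \<le> (\<Sum>i<K. t ^ i * \<chi> i x)" using \<open>i < K\<close> \<chi>nn t0 by (intro member_le_sum) auto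
    moreover have "t ^ i > 0" using t0 by simp
    ultimately have "t ^ i * \<chi> i x > 0" by simp
    thus ?thesis unfolding f0_def using \<open>t ^ i * \<chi> i x \<le> (\<Sum>i<K. t ^ i * \<chi> i x)\<close> by linarith
  qed
  have G: "\<forall>x\<in>D. g0 x > 0" using g0pos by fastforce
  have polyp: "poly (p x y) t = f0 x * g0 y - f0 y * g0 x" for x y
    unfolding p_def f0_def by (simp add: poly_sum poly_monom sum_subtractf algebra_simps sum_distrib_left)
  have inj: "inj_on (\<lambda>x. f0 x / g0 x) D"
  proof (rule inj_onI, rule ccontr)
    fix x y assume xy: "x \<in> D" "y \<in> D" "f0 x / g0 x = f0 y / g0 y" "x \<noteq> y"
    have "f0 x * g0 y = f0 y * g0 x" using xy(3) G xy(1,2)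
      by (metis frac_eq_eq less_numeral_extra(3))
    hence "poly (p x y) t = 0" using polyp by simp
    hence "t \<in> R" unfolding R_def using xy by (intro UN_I[of "(x, y)"]) auto
    thus False using tR by simp
  qed
  have cf: "circ D f0" unfolding f0_def by (rule circ_sum) (rule circ\<chi>)
  have cg: "circ D g0" unfolding g0_def by (rule circ_sum) (rule circ\<chi>)
  define L where "L = {(x,y). x \<in> D \<and> y \<in> D \<and> f0 x / g0 x < f0 y / g0 y}"
  define Fam where "Fam P N = {C \<in> circuits_tot L. pos C \<subseteq> P \<and> neg C \<subseteq> N}" for P N
  have cov: "pairwise_conformal (Fam P N) \<and> compose_family (Fam P N) = (P, N)"
    if "P \<subseteq> D" "N \<subseteq> D" "P \<inter> N = {}" "\<And>s. (\<Sum>x\<in>P. f0 x - s * g0 x) = (\<Sum>x\<in>N. f0 x - s * g0 x)" for P N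
    unfolding Fam_def L_def
    by (rule cover[OF _ _ that(1,2,3) G inj that(4)]) (use that finD in \<open>auto intro: rev_finite_subset\<close>)
  have sto: "strict_total_order_on D L"
    unfolding strict_total_order_on_def
  proof (intro conjI)
    show "L \<subseteq> D \<times> D" by (auto simp: L_def)
    show "trans L" unfolding trans_def L_def by auto
    show "irrefl L" unfolding irrefl_def L_def by auto
    show "total_on D L" unfolding total_on_def
    proof (intro ballI impI)
      fix x y assume xy: "x \<in> D" "y \<in> D" "x \<noteq> y"
      hence "f0 x / g0 x \<noteq> f0 y / g0 y" using inj unfolding inj_on_def by blast
      thus "(x, y) \<in> L \<or> (y, x) \<in> L" using xy unfolding L_def by (auto simp: linorder_neq_iff)
    qed
  qed
  have ext: "L' = L" if "L' \<in> linear_extensions D L" for L' using ext_unique[OF sto that] .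
  define Av where "Av v = Fam {(u, w) \<in> D. w = v} {(u, w) \<in> D. u = v}" for v
  define A where "A = (\<Union>v\<in>V. Av v)"
  have "twisted_graph V D L A"
    unfolding twisted_graph_def
  proof (intro conjI)
    show "digraph V D" by (rule dg)
    show "strict_partial_order_on D L" using sto unfolding strict_partial_order_on_def strict_total_order_on_def by blast
    show "three_edge_connected V D" by (rule tec)
    show "A \<subseteq> circuits_po D L"
      unfolding A_def Av_def Fam_def circuits_po_def using ext by blast
    show "\<forall>L'\<in>linear_extensions D L. strong_map V D L'"
    proof
      fix L' assume "L' \<in> linear_extensions D L"
      hence L': "L' = L" by (rule ext)
      show "strong_map V D L'" unfolding strong_map_def L'
      proof
        fix X assume "X \<in> cocircuits V D"
        then obtain S where S: "X = signed_cut V D S" "S \<subseteq> V" unfolding cocircuits_def by blast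
        have finS: "finite S" using S(2) finV by (rule finite_subset)
        have "pairwise_conformal (Fam {(u, w) \<in> D. u \<in> S \<and> w \<notin> S} {(u, w) \<in> D. w \<in> S \<and> u \<notin> S})
          \<and> compose_family (Fam {(u, w) \<in> D. u \<in> S \<and> w \<notin> S} {(u, w) \<in> D. w \<in> S \<and> u \<notin> S})
             = ({(u, w) \<in> D. u \<in> S \<and> w \<notin> S}, {(u, w) \<in> D. w \<in> S \<and> u \<notin> S})"
        proof (rule cov)
          fix s
          show "(\<Sum>x\<in>{(u, w) \<in> D. u \<in> S \<and> w \<notin> S}. f0 x - s * g0 x) = (\<Sum>x\<in>{(u, w) \<in> D. w \<in> S \<and> u \<notin> S}. f0 x - s * g0 x)"
            using cut_eq[OF circ_lin2[OF cf cg, of s] finD finS] by simp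
        qed auto
        thus "vector_tot L X" unfolding vector_tot_def S(1) signed_cut_def
          by (intro exI[of _ "Fam {(u, w) \<in> D. u \<in> S \<and> w \<notin> S} {(u, w) \<in> D. w \<in> S \<and> u \<notin> S}"])
             (auto simp: Fam_def)
      qed
    qed
    show "\<exists>Av. A = (\<Union>v\<in>V. Av v) \<and> (\<forall>v\<in>V. \<forall>w\<in>V. v \<noteq> w \<longrightarrow> Av v \<inter> Av w = {}) \<and>
        (\<forall>v\<in>V. pairwise_conformal (Av v) \<and> compose_family (Av v) = star_cocircuit D v)"
    proof (intro exI[of _ Av] conjI ballI impI)
      show "A = (\<Union>v\<in>V. Av v)" by (rule A_def)
    next
      fix v w assume "v \<in> V" "w \<in> V" "v \<noteq> w"
      show "Av v \<inter> Av w = {}"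
      proof (rule ccontr)
        assume "Av v \<inter> Av w \<noteq> {}"
        then obtain C where C: "C \<in> circuits_tot L" "pos C \<subseteq> {(u, x) \<in> D. x = v}" "pos C \<subseteq> {(u, x) \<in> D. x = w}"
          unfolding Av_def Fam_def by blast
        obtain z where "z \<in> pos C" using pos_circ_ne[OF C(1)] by blast
        thus False using C(2,3) \<open>v \<noteq> w\<close> by auto
      qed
    next
      fix v assume "v \<in> V"
      have "pairwise_conformal (Av v) \<and> compose_family (Av v) = ({(u, w) \<in> D. w = v}, {(u, w) \<in> D. u = v})"
        unfolding Av_def
      proof (rule cov)
        fix s
        show "(\<Sum>x\<in>{(u, w) \<in> D. w = v}. f0 x - s * g0 x) = (\<Sum>x\<in>{(u, w) \<in> D. u = v}. f0 x - s * g0 x)"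
          using circ_lin2[OF cf cg, of s] unfolding circ_def by simp
      next
        show "{(u, w) \<in> D. w = v} \<inter> {(u, w) \<in> D. u = v} = {}" using dg unfolding digraph_def by auto
      qed auto
      thus "pairwise_conformal (Av v)" "compose_family (Av v) = star_cocircuit D v"
        unfolding star_cocircuit_def by auto
    qed
  qed
  thus ?thesis by blast
qed


end
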